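(* Let $P$ be a finite set and let $w=\alpha_1\cdots\alpha_n\in P^*$ be a reduced word of length $n\ge1$ with $a=\alpha_1$, $c=\alpha_n$, and let $\ell=|\mathrm{alph}(w)|$. If $\ell\le2$, then $w$ has either the form $(ac)^k$ or $(ab)^ka$ (for some $b\in P$), where $k=\lfloor n/2\rfloor$. If $\ell\ge3$, then there exists a reduced word $w'\in aP^*c$ with $|w'|_\alpha=|w|_\alpha$ for all $\alpha\in P$ such that one of the following holds (all $\beta_i,\gamma_i\in P$, $n_i\in\mathbb N$): (1) $|w|_a=\lceil n/2\rceil$ and, for $k=\ell-1$ and some $d\in\{1,a\}$, $w'=(a\beta_1)^{n_1}\cdots(a\beta_k)^{n_k}d$; (2) $|w|_a=n/2$ and, for $k=\ell-1$, $w'=(a\beta_1)^{n_1}(\beta_2a)^{n_2}\cdots(\beta_ka)^{n_k}$; (3) $|w|_a<n/2$ and, for some $d\in\{1,c\}$ and some $k\le\binom{\ell}{2}$, $w'=(a\gamma_1)^{n_1}(\beta_2\gamma_2)^{n_2}\cdots(\beta_k\gamma_k)^{n_k}d$.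
   Context: A word $\alpha_1\cdots\alpha_n\in P^*$ is reduced if $\alpha_i\ne\alpha_{i+1}$ for all $1\le i<n$. For $w\in P^*$ and $\alpha\in P$, $|w|_\alpha$ is the number of occurrences of $\alpha$ in $w$, and $\mathrm{alph}(w)$ is the set of letters occurring in $w$; $1$ denotes the empty word. (In the paper the requirement on $w'$ is phrased as equality $\pi(w)=\pi(w')$ of extended Parikh images in a free product of abelian groups in which each $\alpha\in P$ is a fixed generator of the $\alpha$-th factor; for reduced words in $aP^*c$ this amounts to equal letter counts.) *)

theory Defs
  imports Main
begin

definition reduced :: "'a list \<Rightarrow> bool" where
  "reduced w \<longleftrightarrow> (\<forall>i. Suc i < length w \<longrightarrow> w ! i \<noteq> w ! Suc i)"

definition pw :: "'a \<Rightarrow> 'a \<Rightarrow> nat \<Rightarrow> 'a list" where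
  "pw x y m = concat (replicate m [x, y])"

end

theory Submission
  imports Defs
begin

lemma reduced_succ: "reduced w \<longleftrightarrow> successively (\<noteq>) w"
  by (simp add: reduced_def successively_conv_nth)

lemma cap_lemma:
  assumes "reduced v" "v \<noteq> []"
  shows "2 * count_list v x + 1 \<le> length v + (if hd v = x then 1 else 0) + (if last v = x then 1 else 0)"
  using assms
proof (induction v)
  case Nil then show ?case by simp
next
  case (Cons y v)
  show ?case
  proof (cases "v = []")
    case True then show ?thesis by auto
  next
    case False
    have r: "reduced v" and yh: "y \<noteq> hd v" using Cons.prems False by (auto simp: reduced_succ successively_Cons)
    have IH: "2 * count_list v x + 1 \<le> length v + (if hd v = x then 1 else 0) + (if last v = x then 1 else 0)"
      using Cons.IH r False by blast
    show ?thesis using IH yh False by (auto split: if_splits)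
  qed
qed

lemma pw_Suc: "pw x y (Suc m) = x # y # pw x y m"
  by (simp add: pw_def)
lemma pw_0[simp]: "pw x y 0 = []" by (simp add: pw_def)
lemma length_pw[simp]: "length (pw x y m) = 2*m" by (induction m) (auto simp: pw_Suc)
lemma count_pw: "count_list (pw x y m) z = m * ((if x = z then 1 else 0) + (if y = z then 1 else 0))"
  by (induction m) (auto simp: pw_Suc)
lemma set_pw: "set (pw x y m) \<subseteq> {x,y}" by (induction m) (auto simp: pw_Suc)
lemma nth_pw: "i < 2*m \<Longrightarrow> pw x y m ! i = (if even i then x else y)"
proof (induction m arbitrary: i)
  case 0 then show ?case by simp
next
  case (Suc m)
  show ?case
  proof (cases i)
    case 0 then show ?thesis by (simp add: pw_Suc)
  next
    case (Suc j) note j = this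
    show ?thesis
    proof (cases j)
      case 0 then show ?thesis using j by (simp add: pw_Suc)
    next
      case (Suc k) then show ?thesis using j Suc.IH[of k] Suc.prems by (simp add: pw_Suc)
    qed
  qed
qed
lemma pw_conv: "pw x y m = concat (replicate m [x,y])" by (simp add: pw_def)
lemma pw_red: "x \<noteq> y \<Longrightarrow> reduced (pw x y m)"
proof (induction m)
  case 0 then show ?case by (simp add: reduced_succ)
next
  case (Suc m) then show ?case by (cases m) (auto simp: pw_Suc reduced_succ successively_Cons)
qed
lemma hd_pw: "m \<ge> 1 \<Longrightarrow> hd (pw x y m) = x" by (cases m) (auto simp: pw_Suc)
lemma last_pw: "m \<ge> 1 \<Longrightarrow> last (pw x y m) = y"
proof (induction m)
  case 0 then show ?case by simp
next
  case (Suc m) then show ?case by (cases m) (auto simp: pw_Suc)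
qed

lemma alt_nth:
  assumes r: "reduced w" and s: "set w = {a,b}" and ab: "a \<noteq> b" and h: "hd w = a"
  shows "i < length w \<Longrightarrow> w ! i = (if even i then a else b)"
proof (induction i)
  case 0 then show ?case using h by (cases w) auto
next
  case (Suc i)
  have "w ! Suc i \<noteq> w ! i" using r Suc.prems by (auto simp: reduced_def)
  moreover have "w ! Suc i \<in> {a,b}" using s Suc.prems nth_mem by (metis)
  ultimately show ?case using Suc by auto
qed

lemma small_case:
  assumes r: "reduced w" and ne: "w \<noteq> []" and l: "card (set w) \<le> 2"
  shows "w = pw (hd w) (last w) (length w div 2) \<or> (\<exists>b\<in>set w. w = pw (hd w) b (length w div 2) @ [hd w])"
proof -
  let ?a = "hd w"
  have aw: "?a \<in> set w" using ne by simp
  have "card (set w) \<noteq> 0" using ne by simp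
  then consider "card (set w) = 1" | "card (set w) = 2" using l by linarith
  then show ?thesis
  proof cases
    case 1
    then obtain x where sx: "set w = {x}" using card_1_singletonE by blast
    have "length w = 1"
    proof (rule ccontr)
      assume "length w \<noteq> 1"
      then have "Suc 0 < length w" using ne by (cases w) auto
      then have "w ! 0 \<noteq> w ! 1" using r by (auto simp: reduced_def)
      moreover have "w!0 \<in> set w" using \<open>Suc 0 < length w\<close> by (intro nth_mem) linarith
      moreover have "w!1 \<in> set w" using \<open>Suc 0 < length w\<close> by (intro nth_mem) linarith
      ultimately show False using sx by auto
    qed
    then obtain y where "w = [y]" by (cases w) auto
    then show ?thesis by auto
  next
    case 2
    then obtain x y where sxy: "set w = {x,y}" "x \<noteq> y" by (auto simp: card_2_iff)
    then obtain b where sb: "set w = {?a, b}" "?a \<noteq> b" using aw by auto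
    have nth: "\<And>i. i < length w \<Longrightarrow> w ! i = (if even i then ?a else b)"
      using alt_nth[OF r sb(1) sb(2)] by simp
    show ?thesis
    proof (cases "even (length w)")
      case True
      have lw: "last w = b" using nth[of "length w - 1"] ne True by (simp add: last_conv_nth)
      have "w = pw ?a b (length w div 2)"
        by (rule nth_equalityI) (use True in \<open>auto simp: nth nth_pw\<close>)
      then show ?thesis using lw by simp
    next
      case False
      have "w = pw ?a b (length w div 2) @ [?a]"
      proof (rule nth_equalityI)
        show "length w = length (pw ?a b (length w div 2) @ [?a])" using False by simp
        fix i assume "i < length w"
        then show "w ! i = (pw ?a b (length w div 2) @ [?a]) ! i"
          using False by (auto simp: nth nth_append nth_pw; presburger)
      qed
      then show ?thesis using sb by auto
    qed
  qed
qed

fun il :: "'a list \<Rightarrow> 'a list \<Rightarrow> 'a list" where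
  "il (x#xs) (y#ys) = x # y # il xs ys"
| "il _ _ = []"

lemma il_len: "length A = length B \<Longrightarrow> length (il A B) = 2 * length A"
  by (induction A B rule: list_induct2) auto

lemma il_nth: "length A = length B \<Longrightarrow> i < length A \<Longrightarrow> il A B ! (2*i) = A ! i \<and> il A B ! Suc (2*i) = B ! i"
proof (induction A B arbitrary: i rule: list_induct2)
  case Nil then show ?case by simp
next
  case (Cons x xs y ys)
  then show ?case by (cases i) auto
qed

lemma il_count: "length A = length B \<Longrightarrow> count_list (il A B) z = count_list A z + count_list B z"
  by (induction A B rule: list_induct2) auto

lemma il_set: "set (il A B) \<subseteq> set A \<union> set B"
  by (induction A B rule: il.induct) auto

lemma il_zip: "il A B = concat (map (\<lambda>(x,y). [x,y]) (zip A B))"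
  by (induction A B rule: il.induct) auto

fun breaks :: "'b list \<Rightarrow> nat" where
  "breaks (x#y#zs) = (if x = y then 0 else 1) + breaks (y#zs)"
| "breaks _ = 0"

lemma breaks_Cons: "breaks (x # xs) = (if xs = [] then 0 else (if x = hd xs then 0 else 1) + breaks xs)"
  by (cases xs) auto

lemma breaks_append: "breaks (xs @ ys) = breaks xs + breaks ys + (if xs \<noteq> [] \<and> ys \<noteq> [] \<and> last xs \<noteq> hd ys then 1 else 0)"
  by (induction xs) (auto simp: breaks_Cons)

lemma breaks_replicate[simp]: "breaks (replicate m x) = 0"
  by (induction m) (auto simp: breaks_Cons)

lemma breaks_zip: "length A = length B \<Longrightarrow> breaks (zip A B) \<le> breaks A + breaks B"
proof (induction A B rule: list_induct2)
  case Nil then show ?case by simp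
next
  case (Cons x xs y ys)
  then show ?case by (cases xs; cases ys) (auto simp: breaks_Cons)
qed

lemma breaks_concat_rep: "breaks (concat (map (\<lambda>x. replicate (f x) x) xs)) \<le> length xs - 1"
proof (induction xs)
  case Nil then show ?case by simp
next
  case (Cons x xs)
  show ?case using Cons by (cases xs) (auto simp: breaks_append)
qed

lemma breaks_take_drop:
  assumes "0 < N" "N < length S"
  shows "breaks (take N S) + breaks (drop N S) + (if S ! (N - 1) \<noteq> S ! N then 1 else 0) = breaks S"
proof -
  have lt: "last (take N S) = S ! (N - 1)"
    using assms by (subst last_conv_nth) auto
  have "breaks S = breaks (take N S @ drop N S)" by simp
  also have "\<dots> = breaks (take N S) + breaks (drop N S) + (if S ! (N - 1) \<noteq> S ! N then 1 else 0)"
    using assms lt by (subst breaks_append) (auto simp: hd_drop_conv_nth)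
  finally show ?thesis by simp
qed

lemma rle: "ps \<noteq> [] \<Longrightarrow> \<exists>bl. concat (map (\<lambda>(p,m). replicate m p) bl) = ps \<and> (\<forall>b\<in>set bl. snd b \<ge> 1) \<and> length bl = breaks ps + 1"
proof (induction ps)
  case Nil then show ?case by simp
next
  case (Cons x rest)
  show ?case
  proof (cases rest)
    case Nil then show ?thesis by (intro exI[of _ "[(x,1)]"]) auto
  next
    case (Cons y zs)
    then obtain bl where bl: "concat (map (\<lambda>(p,m). replicate m p) bl) = rest" "\<forall>b\<in>set bl. snd b \<ge> 1" "length bl = breaks rest + 1"
      using Cons.IH by auto
    show ?thesis
    proof (cases "x = y")
      case False
      then show ?thesis using bl Cons by (intro exI[of _ "(x,1)#bl"]) auto
    next
      case True
      obtain q m bl' where b: "bl = (q,m) # bl'" using bl(3) by (cases bl) auto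
      have m1: "m \<ge> 1" using bl(2) b by auto
      have "hd rest = q" using bl(1) b m1 by (cases m) auto
      then have qy: "q = y" using Cons by simp
      show ?thesis
        using bl b qy True Cons m1 by (intro exI[of _ "(y, Suc m) # bl'"]) auto
    qed
  qed
qed

definition grp :: "'b list \<Rightarrow> bool" where
  "grp M \<longleftrightarrow> (\<forall>i j k. i \<le> j \<longrightarrow> j \<le> k \<longrightarrow> k < length M \<longrightarrow> M ! i = M ! k \<longrightarrow> M ! j = M ! i)"

lemma count_card: "count_list M x = card {t. t < length M \<and> M ! t = x}"
  by (simp add: count_list_eq_length_filter length_filter_conv_card eq_commute)

lemma grp_count:
  assumes "grp M" "i \<le> k" "k < length M" "M ! i = M ! k"
  shows "k - i + 1 \<le> count_list M (M ! i)"
proof -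
  have "{i..k} \<subseteq> {t. t < length M \<and> M ! t = M ! i}"
    using assms unfolding grp_def by auto
  then have "card {i..k} \<le> card {t. t < length M \<and> M ! t = M ! i}"
    by (intro card_mono) auto
  then show ?thesis using assms(2) by (simp add: count_card Suc_diff_le)
qed

lemma grp_concat_rep: "distinct xs \<Longrightarrow> grp (concat (map (\<lambda>x. replicate (f x) x) xs))"
proof (induction xs)
  case Nil then show ?case by (simp add: grp_def)
next
  case (Cons x xs)
  define M where "M = concat (map (\<lambda>x. replicate (f x) x) xs)"
  have gM: "grp M" using Cons M_def by auto
  have xM: "x \<notin> set M" using Cons.prems unfolding M_def by auto
  show ?case unfolding M_def[symmetric] grp_def
  proof (intro allI impI)
    fix i j k assume ij: "i \<le> j" and jk: "j \<le> k" and k: "k < length (concat (map (\<lambda>x. replicate (f x) x) (x#xs)))"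
      and eq: "concat (map (\<lambda>x. replicate (f x) x) (x#xs)) ! i = concat (map (\<lambda>x. replicate (f x) x) (x#xs)) ! k"
    have L: "concat (map (\<lambda>x. replicate (f x) x) (x#xs)) = replicate (f x) x @ M" by (simp add: M_def)
    show "concat (map (\<lambda>x. replicate (f x) x) (x#xs)) ! j = concat (map (\<lambda>x. replicate (f x) x) (x#xs)) ! i"
    proof (cases "k < f x")
      case True then show ?thesis unfolding L using ij jk by (simp add: nth_append)
    next
      case False
      show ?thesis
      proof (cases "i < f x")
        case True
        have "M ! (k - f x) \<in> set M" using k False by (intro nth_mem) (simp add: L M_def)
        then show ?thesis using eq True False xM unfolding L by (auto simp: nth_append)
      next
        case False2: False
        have "M ! (j - f x) = M ! (i - f x)"
          using gM[unfolded grp_def, rule_format, of "i - f x" "j - f x" "k - f x"] ij jk k eq False False2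
          unfolding L by (auto simp: nth_append)
        then show ?thesis using ij jk False2 unfolding L by (auto simp: nth_append)
      qed
    qed
  qed
qed

lemma S_interleave:
  fixes a :: 'a and M :: "'a list"
  assumes p1: "1 \<le> p" and pq: "p + q \<le> N" and len: "p + length M + q = 2*N"
    and aM: "a \<notin> set M" and g: "grp M"
    and capM: "\<forall>x. count_list M x \<le> N"
    and capN: "\<forall>x. count_list M x = N \<longrightarrow> q = 0 \<and> M \<noteq> [] \<and> x = last M"
  defines "S \<equiv> replicate p a @ M @ replicate q a"
  shows "(\<forall>j<N. S!j \<noteq> S!(N+j)) \<and> (\<forall>j. Suc j < N \<longrightarrow> S!(N+j) \<noteq> S!(Suc j))"
proof -
  have Snth: "\<And>i. i < 2*N \<Longrightarrow> S!i = (if i < p then a else if i < p + length M then M!(i-p) else a)"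
    using len unfolding S_def by (auto simp: nth_append)
  have inM: "\<And>t. t < length M \<Longrightarrow> M ! t \<noteq> a" using aM nth_mem by metis
  have C1: "S!j \<noteq> S!(N+j)" if j: "j < N" for j
  proof
    assume eq: "S!j = S!(N+j)"
    show False
    proof (cases "j < p")
      case True
      show False
      proof (cases "N + j < p + length M")
        case True2: True
        have "N+j-p < length M" using True2 pq by linarith
        then have "M ! (N+j-p) \<noteq> a" by (rule inM)
        then show False using eq True True2 Snth[of j] Snth[of "N+j"] j pq by auto
      next
        case False
        then show False using True pq len by linarith
      qed
    next
      case False
      have jM: "j - p < length M" using j pq len False by linarith
      show False
      proof (cases "N + j < p + length M")
        case True
        have e2: "M!(j-p) = M!(N+j-p)" using eq Snth[of j] Snth[of "N+j"] j False True by auto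
        have "N + j - p - (j - p) + 1 \<le> count_list M (M!(j-p))"
          using grp_count[OF g _ _ e2] True False by simp
        then show False using capM[rule_format, of "M!(j-p)"] False by simp
      next
        case False2: False
        have jj: "j < p + length M" using jM False by linarith
        have s1: "S!j = M!(j-p)" using Snth[of j] j False jj by simp
        have s2: "S!(N+j) = a" using Snth[of "N+j"] j False2 pq by auto
        show False using eq s1 s2 inM[OF jM] by simp
      qed
    qed
  qed
  have C2: "S!(N+j) \<noteq> S!(Suc j)" if j: "Suc j < N" for j
  proof
    assume eq: "S!(N+j) = S!(Suc j)"
    show False
    proof (cases "Suc j < p")
      case True
      show False
      proof (cases "N + j < p + length M")
        case True2: True
        have "N+j-p < length M" using True2 pq by linarith
        then have "M ! (N+j-p) \<noteq> a" by (rule inM)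
        then show False using eq True True2 Snth[of "Suc j"] Snth[of "N+j"] j pq by auto
      next
        case False
        then show False using True pq len by linarith
      qed
    next
      case False
      have jM: "Suc j - p < length M" using j pq len False by linarith
      show False
      proof (cases "N + j < p + length M")
        case True
        have e2: "M!(Suc j-p) = M!(N+j-p)" using eq Snth[of "Suc j"] Snth[of "N+j"] j False True by auto
        have c1: "N + j - p - (Suc j - p) + 1 \<le> count_list M (M!(Suc j-p))"
          using grp_count[OF g _ _ e2] True False j by simp
        have "N + j - p - (Suc j - p) + 1 = N" using False j by simp
        then have cN: "count_list M (M!(Suc j-p)) = N" using c1 capM by (metis le_antisym)
        then have q0: "q = 0" and Mne: "M \<noteq> []" and lastM: "M!(Suc j-p) = last M" using capN by auto
        have lM: "last M = M ! (length M - 1)" using Mne by (simp add: last_conv_nth)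
        have e3: "M!(Suc j-p) = M!(length M - 1)" using lastM lM by simp
        have "length M - 1 - (Suc j - p) + 1 \<le> count_list M (M!(Suc j-p))"
          using grp_count[OF g _ _ e3] jM by simp
        then show False using cN q0 len j False by simp
      next
        case False2: False
        have jj: "Suc j < p + length M" using jM False by linarith
        have s1: "S!(Suc j) = M!(Suc j-p)" using Snth[of "Suc j"] j False jj by simp
        have s2: "S!(N+j) = a" using Snth[of "N+j"] j False2 pq by auto
        show False using eq s1 s2 inM[OF jM] by simp
      qed
    qed
  qed
  show ?thesis using C1 C2 by blast
qed

lemma il_reduced:
  assumes len: "length S = 2*N"
    and C: "(\<forall>j<N. S!j \<noteq> S!(N+j)) \<and> (\<forall>j. Suc j < N \<longrightarrow> S!(N+j) \<noteq> S!(Suc j))"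
  shows "reduced (il (take N S) (drop N S))"
proof -
  let ?A = "take N S" and ?B = "drop N S"
  have lAB: "length ?A = length ?B" "length ?A = N" using len by auto
  have nA: "\<And>j. j < N \<Longrightarrow> ?A ! j = S ! j" by simp
  have nB: "\<And>j. j < N \<Longrightarrow> ?B ! j = S ! (N + j)" using len by simp
  show ?thesis unfolding reduced_def
  proof (intro allI impI)
    fix i assume i: "Suc i < length (il ?A ?B)"
    then have i2: "Suc i < 2*N" using il_len[OF lAB(1)] lAB by simp
    have "i = 2*(i div 2) \<or> i = Suc (2*(i div 2))" by presburger
    then obtain j where "i = 2*j \<or> i = Suc (2*j)" by blast
    then show "il ?A ?B ! i \<noteq> il ?A ?B ! Suc i"
    proof
      assume ij: "i = 2*j"
      then have jN: "j < N" using i2 by simp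
      then show ?thesis using il_nth[OF lAB(1), of j] lAB ij C nA nB by auto
    next
      assume ij: "i = Suc (2*j)"
      then have jN: "Suc j < N" using i2 by simp
      have "Suc i = 2 * Suc j" using ij by simp
      then show ?thesis using il_nth[OF lAB(1), of j] il_nth[OF lAB(1), of "Suc j"] lAB ij C nA nB jN by auto
    qed
  qed
qed

lemma count_replicate: "count_list (replicate m x) z = (if x = z then m else 0)"
  by (induction m) auto

lemma count_M: "distinct xs \<Longrightarrow> count_list (concat (map (\<lambda>x. replicate (h x) x) xs)) z = (if z \<in> set xs then h z else 0)"
  by (induction xs) (auto simp: count_replicate)

lemma length_M: "length (concat (map (\<lambda>x. replicate (h x) x) xs)) = sum_list (map h xs)"
  by (induction xs) auto

lemma set_M: "set (concat (map (\<lambda>x. replicate (h x) x) xs)) \<subseteq> set xs"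
  by (induction xs) auto

lemma pairs_blocks: "concat (map (\<lambda>(x,y). [x,y]) (concat (map (\<lambda>(p,m). replicate m p) bl))) = concat (map (\<lambda>((x,y),m). pw x y m) bl)"
proof (induction bl)
  case Nil then show ?case by simp
next
  case (Cons b bl)
  obtain x y m where b: "b = ((x,y),m)" by (metis prod.exhaust)
  have "concat (map (\<lambda>(x,y). [x,y]) (replicate m (x,y))) = pw x y m"
    by (induction m) (auto simp: pw_Suc)
  then show ?case using Cons b by simp
qed

lemma hd_blocks: "bl \<noteq> [] \<Longrightarrow> snd (hd bl) \<ge> 1 \<Longrightarrow> hd (concat (map (\<lambda>(p,m). replicate m p) bl)) = fst (hd bl)"
proof -
  assume a1: "bl \<noteq> []" and a2: "snd (hd bl) \<ge> 1"
  obtain p m rest where b: "bl = (p,m) # rest" using a1 by (metis list.exhaust prod.exhaust)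
  obtain k where "m = Suc k" using a2 b by (cases m) auto
  then show ?thesis using b by simp
qed

lemma gen_S:
  assumes len: "length S = 2*N" and N1: "1 \<le> N"
    and C: "(\<forall>j<N. S!j \<noteq> S!(N+j)) \<and> (\<forall>j. Suc j < N \<longrightarrow> S!(N+j) \<noteq> S!(Suc j))"
  shows "\<exists>bl. concat (map (\<lambda>((x,y),m). pw x y m) bl) = il (take N S) (drop N S) \<and> bl \<noteq> []
     \<and> fst (fst (hd bl)) = S!0 \<and> (\<forall>b\<in>set bl. fst (fst b) \<in> set S \<and> snd (fst b) \<in> set S)
     \<and> length bl + (if S!(N-1) \<noteq> S!N then 1 else 0) \<le> breaks S + 1"
proof -
  let ?A = "take N S" and ?B = "drop N S"
  let ?ps = "zip ?A ?B"
  have lAB: "length ?A = length ?B" "length ?A = N" using len by auto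
  have psne: "?ps \<noteq> []" using lAB N1 by (cases ?A; cases ?B) auto
  obtain bl where bl: "concat (map (\<lambda>(p,m). replicate m p) bl) = ?ps" "\<forall>b\<in>set bl. snd b \<ge> 1" "length bl = breaks ?ps + 1"
    using rle[OF psne] by blast
  have e1: "concat (map (\<lambda>((x,y),m). pw x y m) bl) = il ?A ?B"
    using pairs_blocks[of bl] bl(1) il_zip[of ?A ?B] by simp
  have blne: "bl \<noteq> []" using bl(1) psne by auto
  have "fst (hd bl) = hd ?ps" using hd_blocks[OF blne] bl(2) blne bl(1) by simp
  moreover have "hd ?ps = (S!0, S!N)"
  proof -
    have "hd ?ps = ?ps ! 0" using psne by (simp add: hd_conv_nth)
    also have "\<dots> = (?A!0, ?B!0)" using lAB N1 by (intro nth_zip) auto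
    finally show ?thesis using N1 len by simp
  qed
  ultimately have h1: "fst (fst (hd bl)) = S!0" by simp
  have h2: "\<forall>b\<in>set bl. fst (fst b) \<in> set S \<and> snd (fst b) \<in> set S"
  proof
    fix b assume bb: "b \<in> set bl"
    obtain p m where b: "b = (p,m)" by (metis prod.exhaust)
    have "m \<ge> 1" using bl(2) bb b by auto
    then have "p \<in> set (replicate m p)" by simp
    then have "p \<in> set (concat (map (\<lambda>(p,m). replicate m p) bl))"
    proof -
      have "replicate m p \<in> set (map (\<lambda>(p,m). replicate m p) bl)"
        unfolding set_map using rev_image_eqI[OF bb, of "replicate m p" "\<lambda>(p,m). replicate m p"] b by simp
      then show ?thesis using \<open>p \<in> set (replicate m p)\<close> by (simp only: set_concat) blast
    qed
    then have "p \<in> set ?ps" using bl(1) by simp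
    then have "fst p \<in> set ?A \<and> snd p \<in> set ?B" using set_zip_leftD[of "fst p" "snd p" ?A ?B] set_zip_rightD[of "fst p" "snd p" ?A ?B] by simp
    then show "fst (fst b) \<in> set S \<and> snd (fst b) \<in> set S" using b by (auto dest: in_set_takeD in_set_dropD)
  qed
  have "breaks ?ps \<le> breaks ?A + breaks ?B" by (rule breaks_zip[OF lAB(1)])
  moreover have "breaks ?A + breaks ?B + (if S ! (N - 1) \<noteq> S ! N then 1 else 0) = breaks S"
    using breaks_take_drop[of N S] N1 len by simp
  ultimately have h3: "length bl + (if S!(N-1) \<noteq> S!N then 1 else 0) \<le> breaks S + 1" using bl(3) by simp
  show ?thesis using e1 blne h1 h2 h3 by blast
qed

lemma last_M: "xs \<noteq> [] \<Longrightarrow> h (last xs) \<ge> 1 \<Longrightarrow> last (concat (map (\<lambda>x. replicate (h x) x) xs)) = last xs"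
proof (induction xs)
  case Nil then show ?case by simp
next
  case (Cons x xs)
  show ?case
  proof (cases "xs = []")
    case True
    then show ?thesis using Cons by (cases "h x") auto
  next
    case False
    have ne: "concat (map (\<lambda>x. replicate (h x) x) xs) \<noteq> []"
    proof
      assume "concat (map (\<lambda>x. replicate (h x) x) xs) = []"
      then have "replicate (h (last xs)) (last xs) = []" using False by simp
      then show False using Cons.prems False by simp
    qed
    then show ?thesis using Cons False by simp
  qed
qed

lemma core_S:
  assumes d: "distinct xs" and xne: "xs \<noteq> []" and aX: "a \<notin> set xs"
    and hpos: "\<forall>x\<in>set xs. 1 \<le> h x" and p1: "1 \<le> p" and pq: "p + q \<le> N"
    and sum: "p + q + sum_list (map h xs) = 2*N"
    and capx: "\<forall>x\<in>set xs. h x \<le> N" and capN: "\<forall>x\<in>set xs. h x = N \<longrightarrow> q = 0 \<and> x = last xs"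
  shows "\<exists>bl. reduced (concat (map (\<lambda>((x,y),m). pw x y m) bl))
    \<and> (\<forall>z. count_list (concat (map (\<lambda>((x,y),m). pw x y m) bl)) z = (if z = a then p + q else if z \<in> set xs then h z else 0))
    \<and> hd (concat (map (\<lambda>((x,y),m). pw x y m) bl)) = a
    \<and> last (concat (map (\<lambda>((x,y),m). pw x y m) bl)) = (if q = 0 then last xs else a)
    \<and> set (concat (map (\<lambda>((x,y),m). pw x y m) bl)) \<subseteq> insert a (set xs)
    \<and> bl \<noteq> [] \<and> fst (fst (hd bl)) = a \<and> (\<forall>b\<in>set bl. fst (fst b) \<in> insert a (set xs) \<and> snd (fst b) \<in> insert a (set xs))
    \<and> length bl \<le> length xs + 1 + (if q = 0 then 0 else 1)
    \<and> (p + h (hd xs) = N \<and> 2 \<le> length xs \<longrightarrow> length bl + 1 \<le> length xs + 1 + (if q = 0 then 0 else 1))"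
proof -
  define M where "M = concat (map (\<lambda>x. replicate (h x) x) xs)"
  define S where "S = replicate p a @ M @ replicate q a"
  have N1: "1 \<le> N" using p1 pq by simp
  have lenM: "length M = sum_list (map h xs)" unfolding M_def by (rule length_M)
  have len: "length S = 2*N" using sum lenM unfolding S_def by simp
  have aM: "a \<notin> set M" using set_M[of h xs] aX unfolding M_def by auto
  have g: "grp M" unfolding M_def using d by (rule grp_concat_rep)
  have cM: "\<And>z. count_list M z = (if z \<in> set xs then h z else 0)" unfolding M_def using d by (rule count_M)
  have capM: "\<forall>x. count_list M x \<le> N" using cM capx by simp
  have lastM: "last M = last xs" unfolding M_def using xne hpos by (intro last_M) auto
  have "count_list M (last xs) \<ge> 1" using cM[of "last xs"] xne hpos by simp
  then have Mne: "M \<noteq> []" by (cases M) auto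
  have capN': "\<forall>x. count_list M x = N \<longrightarrow> q = 0 \<and> M \<noteq> [] \<and> x = last M"
  proof (intro allI impI)
    fix x assume "count_list M x = N"
    then have "x \<in> set xs" "h x = N" using cM[of x] N1 by (auto split: if_splits)
    then show "q = 0 \<and> M \<noteq> [] \<and> x = last M" using capN Mne lastM by auto
  qed
  have C: "(\<forall>j<N. S!j \<noteq> S!(N+j)) \<and> (\<forall>j. Suc j < N \<longrightarrow> S!(N+j) \<noteq> S!(Suc j))"
    unfolding S_def using sum lenM by (intro S_interleave[OF p1 pq _ aM g capM capN']) simp
  obtain bl where bl: "concat (map (\<lambda>((x,y),m). pw x y m) bl) = il (take N S) (drop N S)" "bl \<noteq> []"
     "fst (fst (hd bl)) = S!0" "\<forall>b\<in>set bl. fst (fst b) \<in> set S \<and> snd (fst b) \<in> set S"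
     "length bl + (if S!(N-1) \<noteq> S!N then 1 else 0) \<le> breaks S + 1"
    using gen_S[OF len N1 C] by blast
  let ?w = "concat (map (\<lambda>((x,y),m). pw x y m) bl)"
  let ?A = "take N S" and ?B = "drop N S"
  have lAB: "length ?A = length ?B" "length ?A = N" using len by auto
  have S0: "S!0 = a" unfolding S_def using p1 by (simp add: nth_append)
  have setS: "set S \<subseteq> insert a (set xs)" unfolding S_def using set_M[of h xs] M_def by auto
  have r: "reduced ?w" using bl(1) il_reduced[OF len C] by simp
  have cnt: "\<forall>z. count_list ?w z = (if z = a then p + q else if z \<in> set xs then h z else 0)"
  proof
    fix z
    have "count_list ?w z = count_list ?A z + count_list ?B z" using bl(1) il_count[OF lAB(1)] by simp
    also have "\<dots> = count_list S z" by (metis count_list_append append_take_drop_id)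
    also have "\<dots> = (if z = a then p + q else if z \<in> set xs then h z else 0)"
      unfolding S_def using cM[of z] aX by (auto simp: count_replicate)
    finally show "count_list ?w z = (if z = a then p + q else if z \<in> set xs then h z else 0)" .
  qed
  have lw: "length ?w = 2*N" using bl(1) il_len[OF lAB(1)] lAB by simp
  have hdw: "hd ?w = a"
  proof -
    have wne: "?w \<noteq> []" using lw N1 by (metis list.size(3) mult_is_0 not_one_le_zero zero_neq_numeral)
    have Sne: "S \<noteq> []" using len N1 by auto
    have e1: "hd ?w = ?w ! (2*0)" using hd_conv_nth[OF wne] by simp
    have e2: "?w ! (2*0) = ?A ! 0" using bl(1) il_nth[OF lAB(1), of 0] lAB N1 Sne by simp
    show ?thesis using e1 e2 S0 N1 Sne by simp
  qed
  have lastw: "last ?w = (if q = 0 then last xs else a)"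
  proof -
    have wne: "?w \<noteq> []" using lw N1 by (metis list.size(3) mult_is_0 not_one_le_zero zero_neq_numeral)
    have "last ?w = ?w ! (length ?w - 1)" using last_conv_nth[OF wne] by simp
    also have "length ?w - 1 = Suc (2*(N-1))" using lw N1 by simp
    finally have "last ?w = ?w ! Suc (2*(N-1))" .
    also have "\<dots> = ?B ! (N-1)" using bl(1) il_nth[OF lAB(1), of "N-1"] lAB N1 by simp
    also have "\<dots> = S ! (2*N - 1)" using len N1 by (simp add: mult_2)
    also have "\<dots> = last S" proof - have "S \<noteq> []" using len N1 by auto then show ?thesis using len by (simp add: last_conv_nth) qed
    also have "\<dots> = (if q = 0 then last xs else a)" unfolding S_def using Mne lastM by auto
    finally show ?thesis .
  qed
  have setw: "set ?w \<subseteq> insert a (set xs)"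
    using bl(1) il_set[of ?A ?B] setS by (auto dest: in_set_takeD in_set_dropD)
  have bS: "breaks S \<le> length xs - 1 + 1 + (if q = 0 then 0 else 1)"
  proof -
    have bM: "breaks M \<le> length xs - 1" unfolding M_def by (rule breaks_concat_rep)
    have "breaks (M @ replicate q a) \<le> breaks M + (if q = 0 then 0 else 1)"
      by (subst breaks_append) auto
    moreover have "breaks S \<le> breaks (M @ replicate q a) + 1"
      unfolding S_def by (subst breaks_append) auto
    ultimately show ?thesis using bM by linarith
  qed
  have len1: "length bl \<le> length xs + 1 + (if q = 0 then 0 else 1)"
    using bl(5) bS xne by (cases xs) (auto split: if_splits)
  have len2: "length bl + 1 \<le> length xs + 1 + (if q = 0 then 0 else 1)" if hN: "p + h (hd xs) = N" and l2: "2 \<le> length xs"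
  proof -
    obtain x1 x2 rest where xs: "xs = x1 # x2 # rest" using l2 by (cases xs; cases "tl xs") auto
    have x12: "x1 \<noteq> x2" using d xs by auto
    have h1: "h x1 \<ge> 1" "h x2 \<ge> 1" using hpos xs by auto
    have Meq: "M = replicate (h x1) x1 @ replicate (h x2) x2 @ concat (map (\<lambda>x. replicate (h x) x) rest)"
      unfolding M_def xs by simp
    have "S ! (N-1) = M ! (h x1 - 1)"
    proof -
      have "N - 1 = p + (h x1 - 1)" using hN xs h1 by simp
      moreover have "h x1 - 1 < length M" using Meq h1 by simp
      ultimately show ?thesis unfolding S_def by (simp add: nth_append)
    qed
    also have "\<dots> = x1" using Meq h1 by (simp add: nth_append)
    finally have e1: "S ! (N-1) = x1" .
    have "S ! N = M ! (h x1)"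
    proof -
      have "N = p + h x1" using hN xs by simp
      moreover have "h x1 < length M" using Meq h1 by simp
      ultimately show ?thesis unfolding S_def by (simp add: nth_append)
    qed
    also have "\<dots> = x2" using Meq h1 by (simp add: nth_append)
    finally have e2: "S ! N = x2" .
    show ?thesis using bl(5) bS e1 e2 x12 xne by (cases xs) (auto split: if_splits)
  qed
  have bset: "\<forall>b\<in>set bl. fst (fst b) \<in> insert a (set xs) \<and> snd (fst b) \<in> insert a (set xs)"
    using bl(4) setS by blast
  have h1: "fst (fst (hd bl)) = a" using bl(3) S0 by simp
  show ?thesis
    apply (rule exI[of _ bl])
    using r cnt hdw lastw setw bl(2) h1 bset len1 len2 by blast
qed

definition blw :: "(('a \<times> 'a) \<times> nat) list \<Rightarrow> 'a list" where
  "blw bl = concat (map (\<lambda>((x,y),m). pw x y m) bl)"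

lemma cnt_helper:
  assumes "\<forall>z. f z = (if z = a then c else if z \<in> X then h z else 0)" "X = T - {a}"
    "\<forall>z. z \<notin> T \<longrightarrow> h z = 0" "c = h a"
  shows "\<forall>z. f z = h z"
proof
  fix z show "f z = h z" using assms by (cases "z = a"; cases "z \<in> X") auto
qed

lemma core:
  assumes r: "reduced v" and len: "length v = 2*N" and N1: "1 \<le> N"
  shows "\<exists>bl. reduced (blw bl) \<and> (\<forall>z. count_list (blw bl) z = count_list v z) \<and> hd (blw bl) = hd v
    \<and> last (blw bl) = last v \<and> set (blw bl) \<subseteq> set v \<and> bl \<noteq> [] \<and> fst (fst (hd bl)) = hd v
    \<and> (\<forall>b\<in>set bl. fst (fst b) \<in> set v \<and> snd (fst b) \<in> set v)
    \<and> length bl \<le> (if hd v = last v \<and> 4 \<le> card (set v) then card (set v) + 1 else card (set v))"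
proof -
  define a where "a = hd v"
  define e where "e = last v"
  define T where "T = set v"
  define h where "h = count_list v"
  have vne: "v \<noteq> []" using len N1 by auto
  have cap: "\<And>x. 2*h x + 1 \<le> 2*N + (if a = x then 1 else 0) + (if e = x then 1 else 0)"
    using cap_lemma[OF r vne] len unfolding a_def e_def h_def by simp
  have aT: "a \<in> T" and eT: "e \<in> T" unfolding a_def e_def T_def using vne by auto
  have fT: "finite T" unfolding T_def by simp
  have hpos: "\<forall>x\<in>T. 1 \<le> h x" unfolding h_def T_def
    by (metis count_list_0_iff less_one not_le)
  have hout: "\<And>z. z \<notin> T \<Longrightarrow> h z = 0" unfolding h_def T_def by (simp add: count_notin)
  have sumT: "sum h T = 2*N" unfolding h_def T_def using len by (simp add: sum_count_set)
  have sumTa: "h a + sum h (T - {a}) = 2*N" using sumT aT fT by (simp add: sum.remove)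
  have cardTa: "card (T - {a}) = card T - 1" using aT fT by simp
  have cardT1: "card T \<ge> 1" using aT fT by (metis card_0_eq empty_iff not_one_le_zero le_less_linear less_one)
  show ?thesis
  proof (cases "a = e")
    case False
    obtain ys where ys: "distinct ys" "set ys = T - {a} - {e}" using finite_distinct_list[of "T - {a} - {e}"] fT by blast
    define xs where "xs = ys @ [e]"
    have xd: "distinct xs" "set xs = T - {a}" "xs \<noteq> []" "last xs = e" unfolding xs_def using ys eT False by auto
    have sx: "sum_list (map h xs) = sum h (T - {a})" using xd by (simp add: sum_list_distinct_conv_sum_set)
    have lx: "length xs = card T - 1" using xd cardTa by (metis distinct_card)
    have ha: "h a \<le> N" using cap[of a] False by simp
    have capx: "\<forall>x\<in>set xs. h x \<le> N"
    proof
      fix x assume "x \<in> set xs"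
      then have "x \<noteq> a" using xd by auto
      then show "h x \<le> N" using cap[of x] by (auto split: if_splits)
    qed
    have capN: "\<forall>x\<in>set xs. h x = N \<longrightarrow> 0 = (0::nat) \<and> x = last xs"
    proof (intro ballI impI)
      fix x assume "x \<in> set xs" "h x = N"
      then show "0 = (0::nat) \<and> x = last xs" using cap[of x] xd by (auto split: if_splits)
    qed
    obtain bl where bl: "reduced (blw bl)"
      "\<forall>z. count_list (blw bl) z = (if z = a then h a + 0 else if z \<in> set xs then h z else 0)"
      "hd (blw bl) = a" "last (blw bl) = (if (0::nat) = 0 then last xs else a)"
      "set (blw bl) \<subseteq> insert a (set xs)" "bl \<noteq> []" "fst (fst (hd bl)) = a"
      "\<forall>b\<in>set bl. fst (fst b) \<in> insert a (set xs) \<and> snd (fst b) \<in> insert a (set xs)"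
      "length bl \<le> length xs + 1 + (if (0::nat) = 0 then 0 else 1)"
      using core_S[of xs a h "h a" 0 N, OF xd(1) xd(3) _ _ _ _ _ _ capN] xd hpos aT hpos sx sumTa ha capx
      unfolding blw_def by auto
    have iT: "insert a (set xs) = T" using xd aT by auto
    have cnt: "\<forall>z. count_list (blw bl) z = count_list v z"
      using cnt_helper[of "count_list (blw bl)" a "h a + 0" "set xs" h T] bl(2) xd(2) hout unfolding h_def by simp
    show ?thesis
      apply (rule exI[of _ bl])
      using bl cnt iT xd False lx cardT1 unfolding a_def[symmetric] e_def[symmetric] T_def[symmetric]
      by auto
  next
    case True
    have ha2: "h a \<ge> 2"
    proof -
      obtain x rest where v: "v = x # rest" using vne by (cases v) auto
      have rne: "rest \<noteq> []" using len N1 v by auto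
      have "last rest = x" using True v rne unfolding a_def e_def by simp
      then have "x \<in> set rest" using rne last_in_set by metis
      then have "count_list rest x \<ge> 1" by (metis count_list_0_iff less_one not_le)
      then show ?thesis unfolding h_def a_def using v by simp
    qed
    have ha: "h a \<le> N" using cap[of a] True by simp
    have hx: "\<And>x. x \<in> T - {a} \<Longrightarrow> h x \<le> N - 1"
    proof -
      fix x assume "x \<in> T - {a}"
      then have "x \<noteq> a" "x \<noteq> e" using True by auto
      then show "h x \<le> N - 1" using cap[of x] by auto
    qed
    have sumle: "sum h (T - {a}) \<le> card (T - {a}) * (N - 1)"
      using sum_bounded_above[of "T - {a}" h "N - 1"] hx by simp
    have c2: "card (T - {a}) \<ge> 2"
    proof (rule ccontr)
      assume "\<not> card (T - {a}) \<ge> 2"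
      then have "card (T - {a}) \<le> 1" by simp
      then have "card (T - {a}) * (N - 1) \<le> N - 1" by (simp add: mult_le_cancel2)
      then show False using sumle sumTa ha N1 by linarith
    qed
    show ?thesis
    proof (cases "card (T - {a}) = 2")
      case True2: True
      obtain b c where bc: "T - {a} = {b,c}" "b \<noteq> c" using True2 by (auto simp: card_2_iff)
      obtain x1 x2 where x12: "T - {a} = {x1,x2}" "x1 \<noteq> x2" "h x2 \<le> h x1"
      proof (cases "h c \<le> h b")
        case True then show ?thesis using that bc by blast
      next
        case False then show ?thesis using that[of c b] bc by (auto simp: insert_commute)
      qed
      define xs where "xs = [x1, x2]"
      have xd: "distinct xs" "set xs = T - {a}" "xs \<noteq> []" unfolding xs_def using x12 by auto
      have s3: "h a + h x1 + h x2 = 2*N" using sumTa x12 by simp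
      have b1: "h x1 \<le> N - 1" "h x2 \<le> N - 1" "1 \<le> h x1" "1 \<le> h x2" using hx hpos x12 by auto
      define p where "p = N - h x1"
      define q where "q = h a - p"
      have p1: "1 \<le> p" using b1 N1 unfolding p_def by linarith
      have p2: "2*p \<le> h a" using s3 x12(3) b1 unfolding p_def by linarith
      have q1: "1 \<le> q" "p + q = h a" using p1 p2 unfolding q_def by linarith+
      have capx: "\<forall>x\<in>set xs. h x \<le> N" using b1 xs_def by auto
      have capN: "\<forall>x\<in>set xs. h x = N \<longrightarrow> q = 0 \<and> x = last xs" using b1 xs_def N1 by auto
      have sx: "p + q + sum_list (map h xs) = 2*N" using s3 q1 unfolding xs_def by simp
      have hdx: "p + h (hd xs) = N" unfolding xs_def p_def using b1 by simp
      obtain bl where bl: "reduced (blw bl)"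
        "\<forall>z. count_list (blw bl) z = (if z = a then p + q else if z \<in> set xs then h z else 0)"
        "hd (blw bl) = a" "last (blw bl) = (if q = 0 then last xs else a)"
        "set (blw bl) \<subseteq> insert a (set xs)" "bl \<noteq> []" "fst (fst (hd bl)) = a"
        "\<forall>b\<in>set bl. fst (fst b) \<in> insert a (set xs) \<and> snd (fst b) \<in> insert a (set xs)"
        "p + h (hd xs) = N \<and> 2 \<le> length xs \<longrightarrow> length bl + 1 \<le> length xs + 1 + (if q = 0 then 0 else 1)"
        using core_S[of xs a h p q N, OF xd(1) xd(3) _ _ p1 _ sx capx capN] xd hpos aT q1 ha
        unfolding blw_def by auto
      have lb: "length bl \<le> 3" using bl(9) hdx q1 unfolding xs_def by simp
      have cT: "card T = 3" using True2 cardTa by simp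
      have iT: "insert a (set xs) = T" using xd aT by auto
      have cnt: "\<forall>z. count_list (blw bl) z = count_list v z"
        using cnt_helper[of "count_list (blw bl)" a "p + q" "set xs" h T] bl(2) xd(2) hout q1 unfolding h_def by simp
      show ?thesis
        apply (rule exI[of _ bl])
        using bl cnt iT lb cT q1 True unfolding a_def[symmetric] e_def[symmetric] T_def[symmetric]
        by auto
    next
      case False
      obtain xs where xs: "distinct xs" "set xs = T - {a}" using finite_distinct_list[of "T - {a}"] fT by blast
      have xne: "xs \<noteq> []"
      proof
        assume "xs = []"
        then have "T - {a} = {}" using xs by simp
        then show False using c2 by (metis card.empty not_numeral_le_zero)
      qed
      have sx0: "sum_list (map h xs) = sum h (T - {a})" using xs by (simp add: sum_list_distinct_conv_sum_set)
      have lx: "length xs = card T - 1" using xs cardTa by (metis distinct_card)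
      have capx: "\<forall>x\<in>set xs. h x \<le> N"
      proof
        fix x assume xin: "x \<in> set xs"
        have "h x \<le> N - 1" using hx[of x] xs xin by simp
        then show "h x \<le> N" by simp
      qed
      have capN: "\<forall>x\<in>set xs. h x = N \<longrightarrow> h a - 1 = 0 \<and> x = last xs"
      proof (intro ballI impI)
        fix x assume xin: "x \<in> set xs" and "h x = N"
        have "h x \<le> N - 1" using hx[of x] xs xin by simp
        then show "h a - 1 = 0 \<and> x = last xs" using \<open>h x = N\<close> N1 by simp
      qed
      have sx: "1 + (h a - 1) + sum_list (map h xs) = 2*N" using sx0 sumTa ha2 by simp
      obtain bl where bl: "reduced (blw bl)"
        "\<forall>z. count_list (blw bl) z = (if z = a then 1 + (h a - 1) else if z \<in> set xs then h z else 0)"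
        "hd (blw bl) = a" "last (blw bl) = (if h a - 1 = 0 then last xs else a)"
        "set (blw bl) \<subseteq> insert a (set xs)" "bl \<noteq> []" "fst (fst (hd bl)) = a"
        "\<forall>b\<in>set bl. fst (fst b) \<in> insert a (set xs) \<and> snd (fst b) \<in> insert a (set xs)"
        "length bl \<le> length xs + 1 + (if h a - 1 = 0 then 0 else 1)"
        using core_S[of xs a h 1 "h a - 1" N, OF xs(1) xne _ _ _ _ sx capx capN] xs hpos aT ha2 ha
        unfolding blw_def by auto
      have c4: "card T \<ge> 4" using c2 False cardTa by linarith
      have iT: "insert a (set xs) = T" using xs aT by auto
      have cnt: "\<forall>z. count_list (blw bl) z = count_list v z"
        using cnt_helper[of "count_list (blw bl)" a "1 + (h a - 1)" "set xs" h T] bl(2) xs(2) hout ha2 unfolding h_def by simp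
      have lb: "length bl \<le> card T + 1" using bl(9) lx ha2 c4 by simp
      show ?thesis
        apply (rule exI[of _ bl])
        using bl cnt iT lb c4 ha2 True unfolding a_def[symmetric] e_def[symmetric] T_def[symmetric]
        by auto
    qed
  qed
qed

lemma altE: "\<forall>x\<in>set xs. x \<noteq> a \<Longrightarrow> i < length (concat (map (\<lambda>x. pw a x (f x)) xs)) \<Longrightarrow>
   ((concat (map (\<lambda>x. pw a x (f x)) xs)) ! i = a) = even i"
proof (induction xs arbitrary: i)
  case Nil then show ?case by simp
next
  case (Cons x xs)
  show ?case
  proof (cases "i < 2 * f x")
    case True then show ?thesis using Cons.prems by (simp add: nth_append nth_pw)
  next
    case False
    have "(concat (map (\<lambda>x. pw a x (f x)) xs) ! (i - 2 * f x) = a) = even (i - 2 * f x)"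
      using Cons False by simp
    then show ?thesis using False by (simp add: nth_append)
  qed
qed

lemma altO: "\<forall>x\<in>set xs. x \<noteq> a \<Longrightarrow> i < length (concat (map (\<lambda>x. pw x a (f x)) xs)) \<Longrightarrow>
   ((concat (map (\<lambda>x. pw x a (f x)) xs)) ! i = a) = odd i"
proof (induction xs arbitrary: i)
  case Nil then show ?case by simp
next
  case (Cons x xs)
  show ?case
  proof (cases "i < 2 * f x")
    case True then show ?thesis using Cons.prems by (auto simp: nth_append nth_pw)
  next
    case False
    have "(concat (map (\<lambda>x. pw x a (f x)) xs) ! (i - 2 * f x) = a) = odd (i - 2 * f x)"
      using Cons False by simp
    then show ?thesis using False by (simp add: nth_append)
  qed
qed

lemma len_concat_pw: "even (length (concat (map (\<lambda>x. pw (g x) (k x) (f x)) xs)))"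
  by (induction xs) auto

lemma red_par: "(\<forall>i<length u. (u!i = a) = P i) \<Longrightarrow> (\<forall>i. P i \<noteq> P (Suc i)) \<Longrightarrow> reduced u"
  unfolding reduced_def by (metis Suc_lessD)

lemma reduced_butlast: "reduced w \<Longrightarrow> reduced (butlast w)"
proof -
  assume "reduced w"
  then show ?thesis
  proof (cases "w = []")
    case False
    then have "w = butlast w @ [last w]" by simp
    then show ?thesis using \<open>reduced w\<close> unfolding reduced_succ by (metis successively_append_iff)
  qed simp
qed

lemma two_split: "2 \<le> length xs \<Longrightarrow> xs = hd xs # butlast (tl xs) @ [last xs]"
  by (cases xs) auto

lemma map_shift1: "length xs = k \<Longrightarrow>
   map (\<lambda>i. g (if i - 1 < length xs then xs ! (i - 1) else a)) [1..<Suc k] = map g xs"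
proof (rule nth_equalityI)
  assume "length xs = k"
  then show "length (map (\<lambda>i. g (if i - 1 < length xs then xs ! (i - 1) else a)) [1..<Suc k]) = length (map g xs)" by (simp del: upt_Suc)
  fix i assume l: "length xs = k" and i: "i < length (map (\<lambda>i. g (if i - 1 < length xs then xs ! (i - 1) else a)) [1..<Suc k])"
  then have ik: "i < k" by (simp del: upt_Suc)
  have "[1..<Suc k] ! i = Suc i" using ik by (simp add: nth_upt del: upt_Suc)
  then show "map (\<lambda>i. g (if i - 1 < length xs then xs ! (i - 1) else a)) [1..<Suc k] ! i = map g xs ! i"
    using ik l by (simp del: upt_Suc)
qed

lemma map_shift2: "length xs = Suc k \<Longrightarrow>
   map (\<lambda>i. g (if i - 1 < length xs then xs ! (i - 1) else a)) [2..<Suc (Suc k)] = map g (tl xs)"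
proof (rule nth_equalityI)
  assume "length xs = Suc k"
  then show "length (map (\<lambda>i. g (if i - 1 < length xs then xs ! (i - 1) else a)) [2..<Suc (Suc k)]) = length (map g (tl xs))" by (simp del: upt_Suc)
  fix i assume l: "length xs = Suc k" and i: "i < length (map (\<lambda>i. g (if i - 1 < length xs then xs ! (i - 1) else a)) [2..<Suc (Suc k)])"
  then have ik: "i < k" by (simp del: upt_Suc)
  have "[2..<Suc (Suc k)] ! i = Suc (Suc i)" using ik by (simp add: nth_upt del: upt_Suc)
  then show "map (\<lambda>i. g (if i - 1 < length xs then xs ! (i - 1) else a)) [2..<Suc (Suc k)] ! i = map g (tl xs) ! i"
    using ik l by (simp add: nth_tl del: upt_Suc)
qed

lemma count_len: "\<forall>z. count_list w' z = count_list w z \<Longrightarrow> length w' = length w"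
proof -
  assume h: "\<forall>z. count_list w' z = count_list w z"
  have "length w' = sum (count_list w') (set w \<union> set w')" by (simp add: sum_count_set)
  also have "\<dots> = sum (count_list w) (set w \<union> set w')" using h by simp
  also have "\<dots> = length w" by (simp add: sum_count_set)
  finally show ?thesis .
qed

lemma count_concat_pwE: "distinct xs \<Longrightarrow> \<forall>x\<in>set xs. x \<noteq> a \<Longrightarrow>
  count_list (concat (map (\<lambda>x. pw a x (f x)) xs)) z = (if z = a then sum_list (map f xs) else if z \<in> set xs then f z else 0)"
  by (induction xs) (auto simp: count_pw)

lemma count_concat_pwO: "distinct xs \<Longrightarrow> \<forall>x\<in>set xs. x \<noteq> a \<Longrightarrow>
  count_list (concat (map (\<lambda>x. pw x a (f x)) xs)) z = (if z = a then sum_list (map f xs) else if z \<in> set xs then f z else 0)"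
  by (induction xs) (auto simp: count_pw)

lemma set_counts: "\<forall>z. count_list w' z = count_list w z \<Longrightarrow> set w' = set w"
  by (metis count_list_0_iff subsetI subset_antisym)

lemma last_concat_snoc: "f c \<noteq> [] \<Longrightarrow> last (concat (map f (ys @ [c]))) = last (f c)"
  by simp

lemma case1:
  assumes r: "reduced w" and ne: "w \<noteq> []" and a: "a = hd w" and c: "c = last w" and n: "n = length w"
    and ca: "count_list w a = (n + 1) div 2" and par: "odd n \<or> c \<noteq> a" and l: "l = card (set w)"
    and sP: "set w \<subseteq> P" and l3: "l \<ge> 3"
  shows "\<exists>w'. reduced w' \<and> set w' \<subseteq> P \<and> (\<exists>u. w' = a # u @ [c]) \<and> (\<forall>\<alpha>\<in>P. count_list w' \<alpha> = count_list w \<alpha>)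
    \<and> (\<exists>(\<beta>::nat \<Rightarrow> 'a) (m::nat \<Rightarrow> nat) d. (\<forall>i. \<beta> i \<in> P) \<and> d \<in> {[], [a]} \<and>
          w' = concat (map (\<lambda>i. pw a (\<beta> i) (m i)) [1..<l]) @ d)"
proof -
  define T where "T = set w"
  define h where "h = count_list w"
  have cap: "\<And>x. 2*h x + 1 \<le> n + (if a = x then 1 else 0) + (if c = x then 1 else 0)"
    using cap_lemma[OF r ne] unfolding a c n h_def by simp
  have ca': "h a = (n+1) div 2" using ca h_def by simp
  have caodd: "(c = a) = odd n"
  proof (cases "odd n")
    case True
    then have "2 * h a = n + 1" using ca' by presburger
    then show ?thesis using cap[of a] True by (auto split: if_splits)
  next
    case False then show ?thesis using par by auto
  qed
  have aT: "a \<in> T" and cT: "c \<in> T" unfolding a c T_def using ne by auto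
  have fT: "finite T" unfolding T_def by simp
  have hpos: "\<forall>x\<in>T. 1 \<le> h x" unfolding h_def T_def by (metis count_list_0_iff less_one not_le)
  have hout: "\<And>z. z \<notin> T \<Longrightarrow> h z = 0" unfolding h_def T_def by (simp add: count_notin)
  have sumT: "sum h T = n" unfolding h_def T_def n by (simp add: sum_count_set)
  have sumTa: "h a + sum h (T - {a}) = n" using sumT aT fT by (simp add: sum.remove)
  obtain ys where ys: "distinct ys" "set ys = T - {a} - {c}" using finite_distinct_list[of "T - {a} - {c}"] fT by blast
  define xs where "xs = ys @ (if c = a then [] else [c])"
  have xd: "distinct xs" "set xs = T - {a}" unfolding xs_def using ys cT by auto
  have xa: "\<forall>x\<in>set xs. x \<noteq> a" using xd by auto
  have lx: "length xs = card T - 1" using xd aT fT by (metis distinct_card card_Diff_singleton)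
  have cardT: "card T = l" unfolding T_def l by simp
  have lxs: "l = Suc (length xs)" using lx cardT l3 by simp
  define u0 where "u0 = concat (map (\<lambda>x. pw a x (h x)) xs)"
  define d where "d = (if c = a then [a] else [])"
  define w' where "w' = u0 @ d"
  define \<beta> where "\<beta> = (\<lambda>i. if i - 1 < length xs then xs ! (i - 1) else a)"
  define m where "m = (\<lambda>i. h (\<beta> i))"
  have form: "w' = concat (map (\<lambda>i. pw a (\<beta> i) (m i)) [1..<l]) @ d"
  proof -
    have "map (\<lambda>i. pw a (\<beta> i) (m i)) [1..<l] = map (\<lambda>x. pw a x (h x)) xs"
      unfolding m_def \<beta>_def lxs using map_shift1[of xs "length xs" "\<lambda>x. pw a x (h x)" a] by simp
    then show ?thesis unfolding w'_def u0_def by simp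
  qed
  have bP: "\<forall>i. \<beta> i \<in> P"
  proof
    fix i
    show "\<beta> i \<in> P"
    proof (cases "i - 1 < length xs")
      case True
      then have "xs ! (i-1) \<in> T" using xd nth_mem by (metis Diff_iff)
      then show ?thesis using True sP unfolding \<beta>_def T_def by auto
    next
      case False then show ?thesis using aT sP unfolding \<beta>_def T_def by auto
    qed
  qed
  have ev: "even (length u0)" unfolding u0_def by (rule len_concat_pw)
  have par0: "\<forall>i<length w'. (w'!i = a) = even i"
  proof (intro allI impI)
    fix i assume i: "i < length w'"
    show "(w'!i = a) = even i"
    proof (cases "i < length u0")
      case True then show ?thesis using altE[OF xa, of i h] unfolding w'_def u0_def by (simp add: nth_append)
    next
      case False
      then have "c = a" "i = length u0" using i unfolding w'_def d_def by (auto split: if_splits)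
      then show ?thesis using ev unfolding w'_def d_def by simp
    qed
  qed
  have red: "reduced w'" using red_par[OF par0] by simp
  have cnt: "\<forall>z. count_list w' z = count_list w z"
  proof
    fix z
    have cu: "count_list u0 z = (if z = a then sum_list (map h xs) else if z \<in> set xs then h z else 0)"
      unfolding u0_def by (rule count_concat_pwE[OF xd(1) xa])
    have sx: "sum_list (map h xs) = sum h (T - {a})" using xd by (simp add: sum_list_distinct_conv_sum_set)
    show "count_list w' z = count_list w z"
    proof (cases "z = a")
      case True
      have "count_list w' z = n - h a + (if c = a then 1 else 0)"
        unfolding w'_def d_def using cu True sx sumTa by auto
      also have "\<dots> = h a" using ca' caodd by (cases "c = a") (simp_all, presburger+)
      finally show ?thesis using True h_def by simp
    next
      case False
      then show ?thesis unfolding w'_def d_def using cu xd hout[of z] False unfolding h_def by auto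
    qed
  qed
  have lw: "length w' = n" using count_len[OF cnt] n by simp
  have n3: "n \<ge> 3" using l3 l n card_length[of w] by simp
  have hdw: "hd w' = a" using par0 lw n3 by (metis hd_conv_nth list.size(3) not_numeral_le_zero dvd_0_right zero_less_iff_neq_zero le_zero_eq)
  have lastw: "last w' = c"
  proof (cases "c = a")
    case True then show ?thesis unfolding w'_def d_def by simp
  next
    case False
    have "h c \<ge> 1" using hpos cT by simp
    then have "pw a c (h c) \<noteq> []" by (cases "h c") (auto simp: pw_Suc)
    then have "last u0 = last (pw a c (h c))" unfolding u0_def xs_def using False by simp
    also have "\<dots> = c" using \<open>h c \<ge> 1\<close> by (rule last_pw)
    finally show ?thesis using False unfolding w'_def d_def by simp
  qed
  have split: "\<exists>u. w' = a # u @ [c]" using two_split[of w'] lw n3 hdw lastw by auto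
  have setw: "set w' \<subseteq> P" using set_counts[OF cnt] sP by simp
  have dd: "d \<in> {[], [a]}" unfolding d_def by auto
  show ?thesis using red setw split cnt bP dd form by blast
qed

lemma case2:
  assumes r: "reduced w" and ne: "w \<noteq> []" and a: "a = hd w" and c: "c = last w" and n: "n = length w"
    and ca: "2 * count_list w a = n" and ca2: "c = a" and l: "l = card (set w)"
    and sP: "set w \<subseteq> P" and l3: "l \<ge> 3"
  shows "\<exists>w'. reduced w' \<and> set w' \<subseteq> P \<and> (\<exists>u. w' = a # u @ [c]) \<and> (\<forall>\<alpha>\<in>P. count_list w' \<alpha> = count_list w \<alpha>)
    \<and> (\<exists>(\<beta>::nat \<Rightarrow> 'a) (m::nat \<Rightarrow> nat). (\<forall>i. \<beta> i \<in> P) \<and>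
          w' = pw a (\<beta> 1) (m 1) @ concat (map (\<lambda>i. pw (\<beta> i) a (m i)) [2..<l]))"
proof -
  define T where "T = set w"
  define h where "h = count_list w"
  have aT: "a \<in> T" unfolding a T_def using ne by auto
  have fT: "finite T" unfolding T_def by simp
  have hpos: "\<forall>x\<in>T. 1 \<le> h x" unfolding h_def T_def by (metis count_list_0_iff less_one not_le)
  have hout: "\<And>z. z \<notin> T \<Longrightarrow> h z = 0" unfolding h_def T_def by (simp add: count_notin)
  have sumT: "sum h T = n" unfolding h_def T_def n by (simp add: sum_count_set)
  have sumTa: "h a + sum h (T - {a}) = n" using sumT aT fT by (simp add: sum.remove)
  obtain xs where xd: "distinct xs" "set xs = T - {a}" using finite_distinct_list[of "T - {a}"] fT by blast
  have xa: "\<forall>x\<in>set xs. x \<noteq> a" using xd by auto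
  have lx: "length xs = card T - 1" using xd aT fT by (metis distinct_card card_Diff_singleton)
  have cardT: "card T = l" unfolding T_def l by simp
  obtain k where lk: "length xs = Suc k" and lks: "l = Suc (Suc k)" and k1: "k \<ge> 1"
    using lx cardT l3 by (intro that[of "l - 2"]) auto
  obtain x0 x1 rest where xs: "xs = x0 # x1 # rest" using lk k1 by (cases xs; cases "tl xs") auto
  have x01: "x0 \<noteq> x1" "x0 \<noteq> a" "x1 \<noteq> a" using xd xs xa by auto
  have x0T: "x0 \<in> T" using xd xs by auto
  define u1 where "u1 = concat (map (\<lambda>x. pw x a (h x)) (tl xs))"
  define w' where "w' = pw a x0 (h x0) @ u1"
  define \<beta> where "\<beta> = (\<lambda>i. if i - 1 < length xs then xs ! (i - 1) else a)"
  define m where "m = (\<lambda>i. h (\<beta> i))"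
  have form: "w' = pw a (\<beta> 1) (m 1) @ concat (map (\<lambda>i. pw (\<beta> i) a (m i)) [2..<l])"
  proof -
    have "map (\<lambda>i. pw (\<beta> i) a (m i)) [2..<l] = map (\<lambda>x. pw x a (h x)) (tl xs)"
      unfolding m_def \<beta>_def lks using map_shift2[OF lk, of "\<lambda>x. pw x a (h x)" a] by simp
    moreover have "\<beta> 1 = x0" unfolding \<beta>_def xs by simp
    ultimately show ?thesis unfolding w'_def u1_def m_def by simp
  qed
  have bP: "\<forall>i. \<beta> i \<in> P"
  proof
    fix i
    show "\<beta> i \<in> P"
    proof (cases "i - 1 < length xs")
      case True
      then have "xs ! (i-1) \<in> T" using xd nth_mem by (metis Diff_iff)
      then show ?thesis using True sP unfolding \<beta>_def T_def by auto
    next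
      case False then show ?thesis using aT sP unfolding \<beta>_def T_def by auto
    qed
  qed
  have xa1: "\<forall>x\<in>set (tl xs). x \<noteq> a" using xa xs by auto
  have par1: "\<forall>i<length u1. (u1!i = a) = odd i" unfolding u1_def using altO[OF xa1] by blast
  have r1: "reduced u1" using red_par[OF par1] by simp
  have h1: "h x1 \<ge> 1" "h x0 \<ge> 1" using hpos xd xs by auto
  have hdu1: "hd u1 = x1" unfolding u1_def xs using h1 by (cases "h x1") (auto simp: pw_Suc)
  have u1ne: "u1 \<noteq> []" unfolding u1_def xs using h1 by (cases "h x1") (auto simp: pw_Suc)
  have ev1: "even (length u1)" unfolding u1_def by (rule len_concat_pw)
  have lastu1: "last u1 = a"
  proof -
    have "length u1 \<ge> 1" using u1ne by (cases u1) auto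
    then have "odd (length u1 - 1)" using ev1 by presburger
    then show ?thesis using par1 u1ne by (simp add: last_conv_nth)
  qed
  have red: "reduced w'"
  proof -
    have s1: "successively (\<noteq>) (pw a x0 (h x0))" using pw_red[of a x0 "h x0"] x01(2) unfolding reduced_succ by simp
    have s2: "successively (\<noteq>) u1" using r1 unfolding reduced_succ by simp
    have s3: "last (pw a x0 (h x0)) \<noteq> hd u1" using last_pw[OF h1(2), of a x0] hdu1 x01(1) by simp
    show ?thesis unfolding w'_def reduced_succ successively_append_iff using s1 s2 s3 by blast
  qed
  have cnt: "\<forall>z. count_list w' z = count_list w z"
  proof
    fix z
    have dtl: "distinct (tl xs)" using xd by (simp add: distinct_tl)
    have cu: "count_list u1 z = (if z = a then sum_list (map h (tl xs)) else if z \<in> set (tl xs) then h z else 0)"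
      unfolding u1_def by (rule count_concat_pwO[OF dtl xa1])
    have sx: "sum_list (map h xs) = sum h (T - {a})" using xd by (simp add: sum_list_distinct_conv_sum_set)
    have x0n: "x0 \<notin> set (tl xs)" using xd xs by auto
    show "count_list w' z = count_list w z"
    proof (cases "z = a")
      case True
      have "count_list w' z = h x0 + sum_list (map h (tl xs))"
        unfolding w'_def using cu True x01 by (simp add: count_pw)
      also have "\<dots> = sum_list (map h xs)" using xs by simp
      also have "\<dots> = h a" using sx sumTa ca h_def by simp
      finally show ?thesis using True h_def by simp
    next
      case False
      have "set xs = insert x0 (set (tl xs))" using xs by simp
      have c1: "count_list w' z = (if x0 = z then h x0 else 0) + (if z \<in> set (tl xs) then h z else 0)"
        unfolding w'_def using cu False by (simp add: count_pw)
      show ?thesis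
      proof (cases "z = x0")
        case True then show ?thesis using c1 x0n h_def by simp
      next
        case F2: False
        show ?thesis
        proof (cases "z \<in> set (tl xs)")
          case True then show ?thesis using c1 F2 h_def by simp
        next
          case F3: False
          then have "z \<notin> T" using xd \<open>set xs = insert x0 (set (tl xs))\<close> F2 False by auto
          then show ?thesis using c1 F2 F3 hout h_def by simp
        qed
      qed
    qed
  qed
  have lw: "length w' = n" using count_len[OF cnt] n by simp
  have n3: "n \<ge> 3" using l3 l n card_length[of w] by simp
  have hdw: "hd w' = a" proof - have "pw a x0 (h x0) \<noteq> []" using h1 by (cases "h x0") (auto simp: pw_Suc) then show ?thesis unfolding w'_def using h1 by (simp add: hd_append hd_pw) qed
  have lastw: "last w' = c" unfolding w'_def using u1ne lastu1 ca2 by simp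
  have split: "\<exists>u. w' = a # u @ [c]" using two_split[of w'] lw n3 hdw lastw by auto
  have setw: "set w' \<subseteq> P" using set_counts[OF cnt] sP by simp
  show ?thesis using red setw split cnt bP form by blast
qed

lemma choose_bounds: "l \<ge> 3 \<Longrightarrow> l \<le> l choose 2" "l \<ge> 4 \<Longrightarrow> l + 1 \<le> l choose 2"
proof -
  assume l: "l \<ge> 3"
  have "l * 2 \<le> l * (l - 1)" by (rule mult_le_mono2) (use l in simp)
  then have "l * 2 div 2 \<le> l * (l - 1) div 2" by (rule div_le_mono)
  then show "l \<le> l choose 2" by (simp add: choose_two)
next
  assume l: "l \<ge> 4"
  have h3: "l * 3 \<le> l * (l - 1)" by (rule mult_le_mono2) (use l in simp)
  have "(l * 2 + 2) div 2 \<le> l * (l - 1) div 2" by (intro div_le_mono) (use h3 l in linarith)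
  then show "l + 1 \<le> l choose 2" by (simp add: choose_two)
qed

lemma case3:
  assumes r: "reduced w" and ne: "w \<noteq> []" and a: "a = hd w" and c: "c = last w" and n: "n = length w"
    and l: "l = card (set w)" and sP: "set w \<subseteq> P" and l3: "l \<ge> 3"
  shows "\<exists>w'. reduced w' \<and> set w' \<subseteq> P \<and> (\<exists>u. w' = a # u @ [c]) \<and> (\<forall>\<alpha>\<in>P. count_list w' \<alpha> = count_list w \<alpha>)
    \<and> (\<exists>(\<beta>::nat \<Rightarrow> 'a) (\<gamma>::nat \<Rightarrow> 'a) (m::nat \<Rightarrow> nat) d k.
                        (\<forall>i. \<beta> i \<in> P \<and> \<gamma> i \<in> P) \<and> d \<in> {[], [c]} \<and>
                        1 \<le> k \<and> k \<le> l choose 2 \<and>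
                        w' = pw a (\<gamma> 1) (m 1) @
                             concat (map (\<lambda>i. pw (\<beta> i) (\<gamma> i) (m i)) [2..<Suc k]) @ d)"
proof -
  have n3: "n \<ge> 3" using l3 l n card_length[of w] by simp
  define v where "v = (if even n then w else butlast w)"
  define d where "d = (if even n then [] else [c])"
  have wvd: "w = v @ d" unfolding v_def d_def c using ne by simp
  obtain N where lv: "length v = 2*N" and N1: "1 \<le> N"
  proof (cases "even n")
    case True then show ?thesis using that[of "n div 2"] n3 unfolding v_def n by auto
  next
    case False then show ?thesis using that[of "(n - 1) div 2"] n3 unfolding v_def n by auto
  qed
  have rv: "reduced v" unfolding v_def using r reduced_butlast by auto
  have vne: "v \<noteq> []" using lv N1 by auto
  have hv: "hd v = a" using wvd vne a by simp
  have svw: "set v \<subseteq> set w" using wvd by auto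
  have lastv: "d \<noteq> [] \<Longrightarrow> last v \<noteq> c"
  proof -
    assume "d \<noteq> []"
    then have "d = [c]" unfolding d_def by (auto split: if_splits)
    then have "successively (\<noteq>) (v @ [c])" using r wvd unfolding reduced_succ by simp
    then have "v = [] \<or> [c] = [] \<or> last v \<noteq> hd [c]" unfolding successively_append_iff by blast
    then show "last v \<noteq> c" using vne by simp
  qed
  obtain bl where bl: "reduced (blw bl)" "\<forall>z. count_list (blw bl) z = count_list v z" "hd (blw bl) = hd v"
    "last (blw bl) = last v" "set (blw bl) \<subseteq> set v" "bl \<noteq> []" "fst (fst (hd bl)) = hd v"
    "\<forall>b\<in>set bl. fst (fst b) \<in> set v \<and> snd (fst b) \<in> set v"
    "length bl \<le> (if hd v = last v \<and> 4 \<le> card (set v) then card (set v) + 1 else card (set v))"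
    using core[OF rv lv N1] by blast
  define W where "W = blw bl"
  define w' where "w' = W @ d"
  have Wne: "W \<noteq> []" using bl(2) vne unfolding W_def by (metis count_list_0_iff empty_iff empty_set hd_in_set)
  have red: "reduced w'"
  proof (cases "d = []")
    case True then show ?thesis using bl(1) unfolding w'_def W_def by simp
  next
    case False
    then have "d = [c]" unfolding d_def by (auto split: if_splits)
    then show ?thesis using bl(1) bl(4) lastv[OF False] Wne unfolding w'_def W_def reduced_succ successively_append_iff
      by auto
  qed
  have cnt: "\<forall>z. count_list w' z = count_list w z"
    using bl(2) wvd unfolding w'_def W_def by simp
  have lw: "length w' = n" using count_len[OF cnt] n by simp
  have hdw: "hd w' = a" using bl(3) hv Wne unfolding w'_def W_def by simp
  have lastw: "last w' = c"
  proof (cases "d = []")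
    case True then show ?thesis using bl(4) wvd c unfolding w'_def W_def by simp
  next
    case False then show ?thesis unfolding w'_def d_def by (auto split: if_splits)
  qed
  have split: "\<exists>u. w' = a # u @ [c]" using two_split[of w'] lw n3 hdw lastw by auto
  have setw: "set w' \<subseteq> P" using set_counts[OF cnt] sP by simp
  have dd: "d \<in> {[], [c]}" unfolding d_def by auto
  define B where "B = (\<lambda>i. if i - 1 < length bl then bl ! (i - 1) else ((a,a),0::nat))"
  define \<beta> where "\<beta> = (\<lambda>i. fst (fst (B i)))"
  define \<gamma> where "\<gamma> = (\<lambda>i. snd (fst (B i)))"
  define m where "m = (\<lambda>i. snd (B i))"
  define k where "k = length bl"
  have k1: "1 \<le> k" using bl(6) unfolding k_def by (cases bl) auto
  have aP: "a \<in> P" using sP a ne by auto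
  have bgP: "\<forall>i. \<beta> i \<in> P \<and> \<gamma> i \<in> P"
  proof
    fix i
    show "\<beta> i \<in> P \<and> \<gamma> i \<in> P"
    proof (cases "i - 1 < length bl")
      case True
      then have "bl ! (i-1) \<in> set bl" by simp
      then have "fst (fst (bl ! (i-1))) \<in> set v \<and> snd (fst (bl ! (i-1))) \<in> set v" using bl(8) by blast
      then show ?thesis using True svw sP unfolding \<beta>_def \<gamma>_def B_def by auto
    next
      case False then show ?thesis using aP unfolding \<beta>_def \<gamma>_def B_def by auto
    qed
  qed
  have kb: "k \<le> l choose 2"
  proof -
    have cv: "card (set v) \<le> l" using svw l by (simp add: card_mono)
    show ?thesis
    proof (cases "hd v = last v \<and> 4 \<le> card (set v)")
      case True
      then have "k \<le> card (set v) + 1" using bl(9) unfolding k_def by simp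
      moreover have "l + 1 \<le> l choose 2" using True cv by (intro choose_bounds(2)) simp
      ultimately show ?thesis using cv by linarith
    next
      case False
      then have "k \<le> card (set v)" using bl(9) unfolding k_def by (simp split: if_splits)
      moreover have "l \<le> l choose 2" using l3 by (rule choose_bounds(1))
      ultimately show ?thesis using cv by linarith
    qed
  qed
  have form: "w' = pw a (\<gamma> 1) (m 1) @ concat (map (\<lambda>i. pw (\<beta> i) (\<gamma> i) (m i)) [2..<Suc k]) @ d"
  proof -
    obtain b0 rest where blr: "bl = b0 # rest" using bl(6) by (cases bl) auto
    obtain x0 y0 m0 where b0: "b0 = ((x0,y0),m0)" by (metis prod.exhaust)
    have x0a: "x0 = a" using bl(7) hv blr b0 by simp
    have g: "(\<lambda>i. pw (\<beta> i) (\<gamma> i) (m i)) = (\<lambda>i. (\<lambda>b. pw (fst (fst b)) (snd (fst b)) (snd b)) (B i))"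
      unfolding \<beta>_def \<gamma>_def m_def by simp
    have lk: "length bl = Suc (length rest)" using blr by simp
    have "map (\<lambda>i. pw (\<beta> i) (\<gamma> i) (m i)) [2..<Suc k] = map (\<lambda>b. pw (fst (fst b)) (snd (fst b)) (snd b)) (tl bl)"
      unfolding g B_def k_def using map_shift2[OF lk, of "\<lambda>b. pw (fst (fst b)) (snd (fst b)) (snd b)" "((a,a),0)"] lk
      by (simp del: upt_Suc)
    also have "\<dots> = map (\<lambda>((x,y),m). pw x y m) rest" using blr by (simp add: case_prod_beta)
    finally have e1: "map (\<lambda>i. pw (\<beta> i) (\<gamma> i) (m i)) [2..<Suc k] = map (\<lambda>((x,y),m). pw x y m) rest" .
    have e2: "\<gamma> 1 = y0" "m 1 = m0" unfolding \<gamma>_def m_def B_def using blr b0 by simp_all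
    show ?thesis unfolding w'_def W_def blw_def using e1 e2 blr b0 x0a by simp
  qed
  show ?thesis using red setw split cnt bgP dd k1 kb form by blast
qed

theorem mainTheorem2:
  fixes P :: "'a set" and w :: "'a list"
  assumes "finite P" and "set w \<subseteq> P" and "reduced w" and "length w \<ge> 1"
  defines "a \<equiv> hd w" and "c \<equiv> last w" and "n \<equiv> length w" and "l \<equiv> card (set w)"
  shows "(l \<le> 2 \<longrightarrow>
            (w = pw a c (n div 2) \<or>
             (\<exists>b\<in>P. w = pw a b (n div 2) @ [a])))
       \<and> (l \<ge> 3 \<longrightarrow>
            (\<exists>w'. reduced w' \<and> set w' \<subseteq> P \<and> (\<exists>u. w' = a # u @ [c])
               \<and> (\<forall>\<alpha>\<in>P. count_list w' \<alpha> = count_list w \<alpha>)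
               \<and> ( (count_list w a = (n + 1) div 2 \<and>
                     (\<exists>(\<beta>::nat \<Rightarrow> 'a) (m::nat \<Rightarrow> nat) d. (\<forall>i. \<beta> i \<in> P) \<and> d \<in> {[], [a]} \<and>
                        w' = concat (map (\<lambda>i. pw a (\<beta> i) (m i)) [1..<l]) @ d))
                 \<or> (2 * count_list w a = n \<and>
                     (\<exists>(\<beta>::nat \<Rightarrow> 'a) (m::nat \<Rightarrow> nat). (\<forall>i. \<beta> i \<in> P) \<and>
                        w' = pw a (\<beta> 1) (m 1) @
                             concat (map (\<lambda>i. pw (\<beta> i) a (m i)) [2..<l])))
                 \<or> (2 * count_list w a < n \<and>
                     (\<exists>(\<beta>::nat \<Rightarrow> 'a) (\<gamma>::nat \<Rightarrow> 'a) (m::nat \<Rightarrow> nat) d k.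
                        (\<forall>i. \<beta> i \<in> P \<and> \<gamma> i \<in> P) \<and> d \<in> {[], [c]} \<and>
                        1 \<le> k \<and> k \<le> l choose 2 \<and>
                        w' = pw a (\<gamma> 1) (m 1) @
                             concat (map (\<lambda>i. pw (\<beta> i) (\<gamma> i) (m i)) [2..<Suc k]) @ d)))))"
proof -
  have ne: "w \<noteq> []" using assms(4) by auto
  have sP: "set w \<subseteq> P" by fact
  have r: "reduced w" by fact
  have a': "a = hd w" and c': "c = last w" and n': "n = length w" and l': "l = card (set w)"
    unfolding a_def c_def n_def l_def by simp_all
  show ?thesis
  proof (intro conjI impI)
    assume "l \<le> 2"
    then have c2: "card (set w) \<le> 2" using l' by simp
    have sc: "w = pw a c (n div 2) \<or> (\<exists>b\<in>set w. w = pw a b (n div 2) @ [a])"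
      using small_case[OF r ne c2] unfolding a' c' n' .
    then show "w = pw a c (n div 2) \<or> (\<exists>b\<in>P. w = pw a b (n div 2) @ [a])"
      using sP by blast
  next
    assume l3: "l \<ge> 3"
    have cap: "2 * count_list w a + 1 \<le> n + 1 + (if c = a then 1 else 0)"
      using cap_lemma[OF r ne, of a] a' c' n' by (auto split: if_splits)
    show "\<exists>w'. reduced w' \<and> set w' \<subseteq> P \<and> (\<exists>u. w' = a # u @ [c])
               \<and> (\<forall>\<alpha>\<in>P. count_list w' \<alpha> = count_list w \<alpha>)
               \<and> ( (count_list w a = (n + 1) div 2 \<and>
                     (\<exists>(\<beta>::nat \<Rightarrow> 'a) (m::nat \<Rightarrow> nat) d. (\<forall>i. \<beta> i \<in> P) \<and> d \<in> {[], [a]} \<and>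
                        w' = concat (map (\<lambda>i. pw a (\<beta> i) (m i)) [1..<l]) @ d))
                 \<or> (2 * count_list w a = n \<and>
                     (\<exists>(\<beta>::nat \<Rightarrow> 'a) (m::nat \<Rightarrow> nat). (\<forall>i. \<beta> i \<in> P) \<and>
                        w' = pw a (\<beta> 1) (m 1) @
                             concat (map (\<lambda>i. pw (\<beta> i) a (m i)) [2..<l])))
                 \<or> (2 * count_list w a < n \<and>
                     (\<exists>(\<beta>::nat \<Rightarrow> 'a) (\<gamma>::nat \<Rightarrow> 'a) (m::nat \<Rightarrow> nat) d k.
                        (\<forall>i. \<beta> i \<in> P \<and> \<gamma> i \<in> P) \<and> d \<in> {[], [c]} \<and>
                        1 \<le> k \<and> k \<le> l choose 2 \<and>
                        w' = pw a (\<gamma> 1) (m 1) @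
                             concat (map (\<lambda>i. pw (\<beta> i) (\<gamma> i) (m i)) [2..<Suc k]) @ d)))"
    proof (cases "count_list w a = (n + 1) div 2")
      case True
      show ?thesis
      proof (cases "even n \<and> c = a")
        case True2: True
        have en: "even n" using True2 by simp
        have "(n + 1) div 2 = n div 2" using en by presburger
        then have "2 * count_list w a = 2 * (n div 2)" using True by simp
        then have ca2: "2 * count_list w a = n" using en by simp
        have ca: "c = a" using True2 by simp
        obtain w' where W: "reduced w'" "set w' \<subseteq> P" "\<exists>u. w' = a # u @ [c]" "\<forall>\<alpha>\<in>P. count_list w' \<alpha> = count_list w \<alpha>"
          "\<exists>(\<beta>::nat \<Rightarrow> 'a) (m::nat \<Rightarrow> nat). (\<forall>i. \<beta> i \<in> P) \<and>
          w' = pw a (\<beta> 1) (m 1) @ concat (map (\<lambda>i. pw (\<beta> i) a (m i)) [2..<l])"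
          using case2[OF r ne a' c' n' ca2 ca l' sP l3] by blast
        show ?thesis
          apply (rule exI[of _ w'])
          apply (intro conjI W(1) W(2) W(3) W(4))
          apply (rule disjI2, rule disjI1)
          using W(5) ca2 by blast
      next
        case False
        then have "odd n \<or> c \<noteq> a" by blast
        then obtain w' where W: "reduced w'" "set w' \<subseteq> P" "\<exists>u. w' = a # u @ [c]" "\<forall>\<alpha>\<in>P. count_list w' \<alpha> = count_list w \<alpha>"
          "\<exists>(\<beta>::nat \<Rightarrow> 'a) (m::nat \<Rightarrow> nat) d. (\<forall>i. \<beta> i \<in> P) \<and> d \<in> {[], [a]} \<and>
          w' = concat (map (\<lambda>i. pw a (\<beta> i) (m i)) [1..<l]) @ d"
          using case1[OF r ne a' c' n' True _ l' sP l3] by blast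
        show ?thesis
          apply (rule exI[of _ w'])
          apply (intro conjI W(1) W(2) W(3) W(4))
          apply (rule disjI1)
          using W(5) True by blast
      qed
    next
      case False
      have ar: "\<forall>x::nat. 2*x+1 \<le> n+2 \<longrightarrow> x \<noteq> (n+1) div 2 \<longrightarrow> 2*x < n" by presburger
      have "2 * count_list w a + 1 \<le> n + 2" using cap by (simp split: if_splits)
      then have "2 * count_list w a < n" using ar False by blast
      then have lt: "2 * count_list w a < n" .
      obtain w' where W: "reduced w'" "set w' \<subseteq> P" "\<exists>u. w' = a # u @ [c]" "\<forall>\<alpha>\<in>P. count_list w' \<alpha> = count_list w \<alpha>"
        "\<exists>(\<beta>::nat \<Rightarrow> 'a) (\<gamma>::nat \<Rightarrow> 'a) (m::nat \<Rightarrow> nat) d k.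
                        (\<forall>i. \<beta> i \<in> P \<and> \<gamma> i \<in> P) \<and> d \<in> {[], [c]} \<and>
                        1 \<le> k \<and> k \<le> l choose 2 \<and>
                        w' = pw a (\<gamma> 1) (m 1) @
                             concat (map (\<lambda>i. pw (\<beta> i) (\<gamma> i) (m i)) [2..<Suc k]) @ d"
        using case3[OF r ne a' c' n' l' sP l3] by blast
      show ?thesis
        apply (rule exI[of _ w'])
        apply (intro conjI W(1) W(2) W(3) W(4))
        apply (rule disjI2, rule disjI2)
        using W(5) lt by blast
    qed
  qed
qed

end
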